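(* Let $\mathscr H$ be a complex Hilbert space and $\mathbf{S}=(S_1,\dots,S_d)$, $\mathbf{T}=(T_1,\dots,T_d)\in\mathbb{B}(\mathscr H)^d$ with $S_kT_k=T_kS_k$ for all $k=1,\dots,d$. Then $$w_e(\mathbf{S}\mathbf{T})\le 2\sqrt{d}\,w_e(\mathbf{S})\,w_e(\mathbf{T}).$$
   Context: $\mathbb{B}(\mathscr H)$ denotes the bounded linear operators on $\mathscr H$. For $\mathbf{T}\in\mathbb{B}(\mathscr H)^d$, $w_e(\mathbf{T})=\sup\{(\sum_{k=1}^d|\langle T_kx,x\rangle|^2)^{1/2}: \|x\|=1\}$. Products are componentwise: $\mathbf{S}\mathbf{T}=(S_1T_1,\dots,S_dT_d)$. *)

theory Defs
  imports "HOL-Analysis.Analysis"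
begin

text \<open>A complex Hilbert space is modelled as a real Hilbert space (type class
  real_inner + complete_space) together with an orthogonal complex structure J
  (multiplication by the imaginary unit): J is real-linear, J (J x) = - x, and
  J preserves the real inner product.  Complex scalar multiplication is then
  (a + i b) x = a x + b (J x).\<close>

definition complex_structure :: "('a::real_inner \<Rightarrow> 'a) \<Rightarrow> bool" where
  "complex_structure J \<longleftrightarrow> linear J \<and> (\<forall>x. J (J x) = - x) \<and> (\<forall>x y. inner (J x) (J y) = inner x y)"

text \<open>The complex inner product, linear in the first and conjugate-linear in the
  second argument: cinner J (J x) y = i * cinner J x y, and cinner J x x = norm x ^ 2.\<close>

definition cinner :: "('a::real_inner \<Rightarrow> 'a) \<Rightarrow> 'a \<Rightarrow> 'a \<Rightarrow> complex" where
  "cinner J x y = Complex (inner x y) (- inner (J x) y)"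

definition cbounded :: "('a::real_inner \<Rightarrow> 'a) \<Rightarrow> ('a \<Rightarrow> 'a) \<Rightarrow> bool" where
  "cbounded J T \<longleftrightarrow> bounded_linear T \<and> (\<forall>x. T (J x) = J (T x))"

text \<open>Euclidean operator radius of the d-tuple (T 0, ..., T (d-1)).  The 0 is inserted
  only so that the supremum is 0 on the trivial space; it does not change the value
  otherwise.\<close>

definition euclid_radius :: "('a::real_inner \<Rightarrow> 'a) \<Rightarrow> nat \<Rightarrow> (nat \<Rightarrow> 'a \<Rightarrow> 'a) \<Rightarrow> real" where
  "euclid_radius J d T =
     Sup (insert 0 ((\<lambda>x. sqrt (\<Sum>k<d. (cmod (cinner J (T k x) x))\<^sup>2)) ` {x. norm x = 1}))"

end

theory Submission
  imports Defs
begin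

lemma cinner_add: "linear J \<Longrightarrow> cinner J (a + b) x = cinner J a x + cinner J b x"
  by (simp add: cinner_def complex_eq_iff linear_add inner_add_left)

lemma cinner_diff: "linear J \<Longrightarrow> cinner J (a - b) x = cinner J a x - cinner J b x"
  by (simp add: cinner_def complex_eq_iff linear_diff inner_diff_left)

lemma cinner_scaleR: "linear J \<Longrightarrow> cinner J (r *\<^sub>R a) x = of_real r * cinner J a x"
  by (simp add: cinner_def complex_eq_iff linear_scale)

lemma cinner_scaleR2: "cinner J a (r *\<^sub>R x) = of_real r * cinner J a x"
  by (simp add: cinner_def complex_eq_iff)

lemma cinner_J: "complex_structure J \<Longrightarrow> cinner J (J a) x = \<i> * cinner J a x"
  by (simp add: cinner_def complex_eq_iff complex_structure_def)

lemma Re_cinner: "Re (cinner J a x) = inner a x"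
  by (simp add: cinner_def)

lemma norm_J: "complex_structure J \<Longrightarrow> norm (J a) = norm a"
  by (simp add: complex_structure_def norm_eq_sqrt_inner)

lemma cinner_bound: "complex_structure J \<Longrightarrow> cmod (cinner J a x) \<le> 2 * norm a * norm x"
proof -
  assume cs: "complex_structure J"
  have "cmod (cinner J a x) \<le> \<bar>inner a x\<bar> + \<bar>inner (J a) x\<bar>"
    using cmod_le[of "cinner J a x"] by (simp add: cinner_def)
  also have "\<dots> \<le> norm a * norm x + norm (J a) * norm x"
    by (intro add_mono Cauchy_Schwarz_ineq2)
  finally show ?thesis using norm_J[OF cs] by simp
qed

definition P :: "('a::real_inner \<Rightarrow> 'a) \<Rightarrow> ('a \<Rightarrow> 'a) \<Rightarrow> real \<Rightarrow> bool" where
  "P J V c \<longleftrightarrow> (\<forall>u. cmod (cinner J (V u) u) \<le> c * (norm u)\<^sup>2)"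

lemma P_comb:
  assumes "linear J" "P J A a" "P J B b"
  shows "P J (\<lambda>u. t *\<^sub>R A u + s *\<^sub>R B u) (\<bar>t\<bar> * a + \<bar>s\<bar> * b)"
  unfolding P_def
proof
  fix u
  have "cmod (cinner J (t *\<^sub>R A u + s *\<^sub>R B u) u) = cmod (of_real t * cinner J (A u) u + of_real s * cinner J (B u) u)"
    using assms(1) by (simp add: cinner_add cinner_scaleR)
  also have "\<dots> \<le> \<bar>t\<bar> * cmod (cinner J (A u) u) + \<bar>s\<bar> * cmod (cinner J (B u) u)"
    by (metis norm_mult norm_of_real norm_triangle_ineq)
  also have "\<dots> \<le> \<bar>t\<bar> * (a * (norm u)\<^sup>2) + \<bar>s\<bar> * (b * (norm u)\<^sup>2)"
    using assms(2,3) unfolding P_def by (intro add_mono mult_left_mono) auto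
  finally show "cmod (cinner J (t *\<^sub>R A u + s *\<^sub>R B u) u) \<le> (\<bar>t\<bar> * a + \<bar>s\<bar> * b) * (norm u)\<^sup>2"
    by (simp add: algebra_simps)
qed

lemma P_J: "complex_structure J \<Longrightarrow> P J V c \<Longrightarrow> P J (\<lambda>u. J (V u)) c"
  unfolding P_def by (simp add: cinner_J norm_mult)

lemma P_re: "P J V c \<Longrightarrow> \<bar>inner (V u) u\<bar> \<le> c * (norm u)\<^sup>2"
  unfolding P_def by (metis Re_cinner abs_Re_le_cmod order_trans)

lemma power_ineq:
  assumes lin: "linear V" and c: "c > 0" and b: "\<And>u. \<bar>inner (V u) u\<bar> \<le> c * (norm u)\<^sup>2"
  shows "inner (V (V x)) x \<le> c\<^sup>2 * (norm x)\<^sup>2"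
proof -
  define y where "y = c *\<^sub>R x + V x"
  define z where "z = c *\<^sub>R x - V x"
  define w where "w = c\<^sup>2 *\<^sub>R x - V (V x)"
  have wy: "w = c *\<^sub>R y - V y"
    unfolding w_def y_def using lin by (simp add: linear_add linear_scale algebra_simps power2_eq_square)
  have wz: "w = c *\<^sub>R z + V z"
    unfolding w_def z_def using lin by (simp add: linear_diff linear_scale algebra_simps power2_eq_square)
  have yz: "y + z = c *\<^sub>R x + c *\<^sub>R x" unfolding y_def z_def by simp
  have "inner w (c *\<^sub>R x + c *\<^sub>R x) = inner w y + inner w z"
    by (simp add: yz[symmetric] inner_add_right)
  also have "\<dots> = (c * (norm y)\<^sup>2 - inner (V y) y) + (c * (norm z)\<^sup>2 + inner (V z) z)"
    by (subst wy, subst wz, simp add: inner_diff_left inner_add_left power2_norm_eq_inner)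
  also have "\<dots> \<ge> 0" using b[of y] b[of z] by (simp add: abs_le_iff)
  finally have "0 \<le> 2 * c * inner w x" by (simp add: inner_add_right)
  hence "0 \<le> inner w x" using c by (simp add: zero_le_mult_iff)
  thus ?thesis unfolding w_def by (simp add: inner_diff_left power2_norm_eq_inner)
qed

lemma comm_ineq:
  assumes cs: "complex_structure J" and linA: "linear A" and linB: "linear B"
    and AB: "\<And>x. A (B x) = B (A x)" and AJ: "\<And>x. A (J x) = J (A x)" and BJ: "\<And>x. B (J x) = J (B x)"
    and PA: "P J A a" and PB: "P J B b" and a: "a > 0" and b: "b > 0"
  shows "inner (A (B x)) x \<le> 2 * a * b * (norm x)\<^sup>2"
proof -
  have linJ: "linear J" and JJ: "\<And>x. J (J x) = - x" using cs by (auto simp: complex_structure_def)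
  define t where "t = sqrt (b / a)"
  have t: "t > 0" using a b by (simp add: t_def)
  have ta: "t * a = sqrt (a*b)"
  proof -
    have "t * a = sqrt (b/a) * sqrt (a*a)" using a by (simp add: t_def)
    also have "\<dots> = sqrt (b/a*(a*a))" by (simp only: real_sqrt_mult)
    also have "b/a*(a*a) = a*b" using a by (simp add: field_simps)
    finally show ?thesis .
  qed
  have tb: "b / t = sqrt (a*b)"
  proof -
    have ss: "sqrt (a*b) * sqrt (a*b) = a * b" using a b by simp
    have "sqrt (a*b) * t * a = b * a" by (metis ss ta mult.assoc mult.commute)
    hence "sqrt (a*b) * t = b" using a by simp
    thus ?thesis using t by (simp add: field_simps)
  qed
  define c where "c = t * a + (1/t) * b"
  have c2: "c\<^sup>2 = 4 * a * b" unfolding c_def using ta tb a b by (simp add: power2_eq_square algebra_simps)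
  have c0: "c > 0" unfolding c_def using t a b by (simp add: add_pos_pos)
  define V1 where "V1 = (\<lambda>u. t *\<^sub>R A u + (1/t) *\<^sub>R B u)"
  define W where "W = (\<lambda>u. t *\<^sub>R A u + (-1/t) *\<^sub>R B u)"
  define V2 where "V2 = (\<lambda>u. J (W u))"
  have P1: "P J V1 c" unfolding V1_def c_def using P_comb[OF linJ PA PB, of t "1/t"] t by simp
  have PW: "P J W c" unfolding W_def c_def using P_comb[OF linJ PA PB, of t "-1/t"] t by simp
  have P2: "P J V2 c" unfolding V2_def using P_J[OF cs PW] .
  have linV1: "linear V1" unfolding V1_def
    by (rule linearI) (simp_all add: linear_add linear_scale linA linB algebra_simps)
  have linW: "linear W" unfolding W_def
    by (rule linearI) (simp_all add: linear_add linear_scale linA linB algebra_simps)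
  have linV2: "linear V2" unfolding V2_def using linear_compose[OF linW linJ] by (simp add: o_def)
  have e1: "V1 (V1 x) = (t*t) *\<^sub>R A (A x) + A (B x) + B (A x) + (1/t*(1/t)) *\<^sub>R B (B x)"
    unfolding V1_def using t by (simp add: linear_add linear_diff linear_scale linA linB algebra_simps)
  have e2: "V2 (V2 x) = - ((t*t) *\<^sub>R A (A x) - A (B x) - B (A x) + (1/t*(1/t)) *\<^sub>R B (B x))"
  proof -
    have "V2 (V2 x) = J (W (J (W x)))" unfolding V2_def by simp
    also have "W (J y) = J (W y)" for y unfolding W_def by (simp add: AJ BJ linear_add linear_diff linear_scale linJ)
    hence "J (W (J (W x))) = - W (W x)" by (simp add: JJ)
    also have "W (W x) = (t*t) *\<^sub>R A (A x) - A (B x) - B (A x) + (1/t*(1/t)) *\<^sub>R B (B x)"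
      unfolding W_def using t by (simp add: linear_add linear_diff linear_scale linA linB algebra_simps)
    finally show ?thesis .
  qed
  have four: "(4::real) *\<^sub>R v = v + (v + (v + v))" for v :: 'a
    using scaleR_left_distrib[of 2 2 v] by (simp add: scaleR_2)
  have "V1 (V1 x) + V2 (V2 x) = 4 *\<^sub>R A (B x)" unfolding e1 e2 four by (simp add: AB algebra_simps)
  hence "4 * inner (A (B x)) x = inner (V1 (V1 x)) x + inner (V2 (V2 x)) x"
    by (metis inner_add_left inner_scaleR_left)
  also have "\<dots> \<le> c\<^sup>2 * (norm x)\<^sup>2 + c\<^sup>2 * (norm x)\<^sup>2"
    by (intro add_mono power_ineq[OF linV1 c0] power_ineq[OF linV2 c0] P_re[OF P1] P_re[OF P2])
  finally show ?thesis unfolding c2 by simp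
qed

definition sm :: "('a::real_inner \<Rightarrow> 'a) \<Rightarrow> complex \<Rightarrow> 'a \<Rightarrow> 'a" where
  "sm J w y = Re w *\<^sub>R y + Im w *\<^sub>R J y"

lemma cinner_sm: "complex_structure J \<Longrightarrow> cinner J (sm J w y) x = w * cinner J y x"
proof -
  assume cs: "complex_structure J"
  hence lin: "linear J" by (simp add: complex_structure_def)
  have "cinner J (sm J w y) x = of_real (Re w) * cinner J y x + of_real (Im w) * (\<i> * cinner J y x)"
    unfolding sm_def by (simp add: cinner_add[OF lin] cinner_scaleR[OF lin] cinner_J[OF cs])
  also have "\<dots> = w * cinner J y x" by (simp add: complex_eq_iff)
  finally show ?thesis .
qed

lemma comm_cmod:
  assumes cs: "complex_structure J" and linA: "linear A" and linB: "linear B"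
    and AB: "\<And>x. A (B x) = B (A x)" and AJ: "\<And>x. A (J x) = J (A x)" and BJ: "\<And>x. B (J x) = J (B x)"
    and PA: "P J A a" and PB: "P J B b" and a: "a > 0" and b: "b > 0"
  shows "cmod (cinner J (A (B x)) x) \<le> 2 * a * b * (norm x)\<^sup>2"
proof -
  have linJ: "linear J" and JJ: "\<And>x. J (J x) = - x" using cs by (auto simp: complex_structure_def)
  define q where "q = cinner J (A (B x)) x"
  obtain w where w1: "cmod w = 1" and wq: "w * q = of_real (cmod q)"
  proof (cases "q = 0")
    case True thus ?thesis using that[of 1] by simp
  next
    case False
    show ?thesis
    proof (rule that[of "cnj q / of_real (cmod q)"])
      show "cmod (cnj q / of_real (cmod q)) = 1" using False by (simp add: norm_divide)
      have "cnj q * q = of_real ((cmod q)\<^sup>2)" by (metis complex_norm_square mult.commute)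
      thus "cnj q / of_real (cmod q) * q = of_real (cmod q)" using False
        by (simp add: power2_eq_square field_simps)
    qed
  qed
  define A' where "A' = (\<lambda>u. sm J w (A u))"
  have linA': "linear A'" unfolding A'_def sm_def
    by (rule linearI) (simp_all add: linear_add linear_scale linA linJ algebra_simps)
  have A'B: "A' (B y) = B (A' y)" for y
    unfolding A'_def sm_def by (simp add: linear_add linear_scale linB BJ AB)
  have A'J: "A' (J y) = J (A' y)" for y
    unfolding A'_def sm_def by (simp add: linear_add linear_scale linJ AJ JJ)
  have PA': "P J A' a" using PA w1 unfolding P_def A'_def by (simp add: cinner_sm[OF cs] norm_mult)
  have "cmod q = Re (w * q)" using wq by simp
  also have "\<dots> = inner (A' (B x)) x" unfolding A'_def q_def by (simp only: cinner_sm[OF cs, symmetric] Re_cinner)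
  also have "\<dots> \<le> 2 * a * b * (norm x)\<^sup>2"
    by (rule comm_ineq[OF cs linA' linB A'B A'J BJ PA' PB a b])
  finally show ?thesis unfolding q_def .
qed

lemma P_mono: "P J V a \<Longrightarrow> a \<le> a' \<Longrightarrow> P J V a'"
  unfolding P_def by (meson mult_right_mono order_trans zero_le_power2)

lemma comm_cmod0:
  assumes cs: "complex_structure J" and linA: "linear A" and linB: "linear B"
    and AB: "\<And>x. A (B x) = B (A x)" and AJ: "\<And>x. A (J x) = J (A x)" and BJ: "\<And>x. B (J x) = J (B x)"
    and PA: "P J A a" and PB: "P J B b" and a: "a \<ge> 0" and b: "b \<ge> 0"
  shows "cmod (cinner J (A (B x)) x) \<le> 2 * a * b * (norm x)\<^sup>2"
proof -
  let ?c = "cmod (cinner J (A (B x)) x)" and ?n = "(norm x)\<^sup>2"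
  have e: "?c \<le> 2 * (a+e) * (b+e) * ?n" if "e > 0" for e
    using comm_cmod[OF cs linA linB AB AJ BJ P_mono[OF PA] P_mono[OF PB], of "a+e" "b+e"] that a b by simp
  show ?thesis
  proof (rule field_le_epsilon)
    fix f :: real assume f: "f > 0"
    define e where "e = min 1 (f / (2 * (a + b + 1) * (?n + 1)))"
    have pos: "2 * (a + b + 1) * (?n + 1) > 0" using a b by (intro mult_pos_pos) (auto intro: add_nonneg_pos)
    have e0: "e > 0" using f pos unfolding e_def by (simp del: of_nat_add)
    have e1: "e \<le> 1" by (simp add: e_def)
    have ef: "e * (2 * (a + b + 1) * (?n + 1)) \<le> f"
    proof -
      have pos: "2 * (a + b + 1) * (?n + 1) > 0" using a b by (intro mult_pos_pos) (auto intro: add_nonneg_pos)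
      have "e \<le> f / (2 * (a + b + 1) * (?n + 1))" by (simp add: e_def)
      thus ?thesis using pos by (simp add: field_simps)
    qed
    have "2 * (a+e) * (b+e) * ?n = 2*a*b*?n + e * (2 * (a + b + e) * ?n)" by (simp add: algebra_simps)
    also have "e * (2 * (a + b + e) * ?n) \<le> e * (2 * (a + b + 1) * (?n + 1))"
      using e0 e1 a b by (intro mult_left_mono mult_mono) auto
    finally show "?c \<le> 2*a*b*?n + f" using e[OF e0] ef by linarith
  qed
qed

lemma er_bdd:
  assumes cs: "complex_structure J" and bl: "\<And>k. k < d \<Longrightarrow> bounded_linear (V k)"
  shows "bdd_above (insert 0 ((\<lambda>x. sqrt (\<Sum>k<d. (cmod (cinner J (V k x) x))\<^sup>2)) ` {x. norm x = 1}))"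
proof -
  have "\<forall>k. \<exists>K. k < d \<longrightarrow> (\<forall>x. norm (V k x) \<le> norm x * K)"
    using bl bounded_linear.bounded by blast
  then obtain K where K: "\<And>k x. k < d \<Longrightarrow> norm (V k x) \<le> norm x * K k" by metis
  have "y \<le> sqrt (\<Sum>k<d. (2 * K k)\<^sup>2)" if "y \<in> insert 0 ((\<lambda>x. sqrt (\<Sum>k<d. (cmod (cinner J (V k x) x))\<^sup>2)) ` {x. norm x = 1})" for y
  proof -
    { fix x :: 'a assume x: "norm x = 1"
      have "(cmod (cinner J (V k x) x))\<^sup>2 \<le> (2 * K k)\<^sup>2" if k: "k < d" for k
      proof -
        have "cmod (cinner J (V k x) x) \<le> 2 * norm (V k x) * norm x" by (rule cinner_bound[OF cs])
        also have "\<dots> \<le> 2 * K k" using K[OF k, of x] x by simp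
        finally show ?thesis by (intro power_mono) auto
      qed
      hence "sqrt (\<Sum>k<d. (cmod (cinner J (V k x) x))\<^sup>2) \<le> sqrt (\<Sum>k<d. (2 * K k)\<^sup>2)"
        by (intro real_sqrt_le_mono sum_mono) auto }
    moreover have "0 \<le> (\<Sum>k<d. 4 * (K k)\<^sup>2)" by (intro sum_nonneg) simp
    ultimately show ?thesis using that by auto
  qed
  thus ?thesis by (auto simp: bdd_above_def)
qed

lemma er_ge:
  assumes cs: "complex_structure J" and bl: "\<And>k. k < d \<Longrightarrow> bounded_linear (V k)"
    and k: "k < d" and x: "norm x = 1"
  shows "cmod (cinner J (V k x) x) \<le> euclid_radius J d V"
proof -
  have "(cmod (cinner J (V k x) x))\<^sup>2 \<le> (\<Sum>k<d. (cmod (cinner J (V k x) x))\<^sup>2)"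
    using k by (intro member_le_sum) auto
  hence "cmod (cinner J (V k x) x) \<le> sqrt (\<Sum>k<d. (cmod (cinner J (V k x) x))\<^sup>2)"
    by (rule real_le_rsqrt)
  also have "\<dots> \<le> euclid_radius J d V" unfolding euclid_radius_def
    by (rule cSup_upper[OF _ er_bdd[OF cs bl]]) (use x in auto)
  finally show ?thesis .
qed

lemma er_nonneg:
  assumes cs: "complex_structure J" and bl: "\<And>k. k < d \<Longrightarrow> bounded_linear (V k)"
  shows "0 \<le> euclid_radius J d V"
  unfolding euclid_radius_def by (rule cSup_upper[OF _ er_bdd[OF cs bl]]) auto

lemma er_P:
  assumes cs: "complex_structure J" and bl: "\<And>k. k < d \<Longrightarrow> bounded_linear (V k)"
    and k: "k < d"
  shows "P J (V k) (euclid_radius J d V)"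
  unfolding P_def
proof
  fix u :: 'a
  have lin: "linear (V k)" using bl[OF k] bounded_linear.linear by blast
  show "cmod (cinner J (V k u) u) \<le> euclid_radius J d V * (norm u)\<^sup>2"
  proof (cases "u = 0")
    case True thus ?thesis using lin by (simp add: linear_0 cinner_def complex_eq_iff)
  next
    case False
    define x where "x = (1 / norm u) *\<^sub>R u"
    have x: "norm x = 1" using False by (simp add: x_def)
    have u: "u = norm u *\<^sub>R x" using False by (simp add: x_def)
    have "cinner J (V k u) u = of_real (norm u) * of_real (norm u) * cinner J (V k x) x"
      by (subst (1 2) u) (simp add: linear_scale[OF lin] cinner_scaleR2
            cinner_scaleR[OF conjunct1[OF cs[unfolded complex_structure_def]]])
    hence "cmod (cinner J (V k u) u) = (norm u)\<^sup>2 * cmod (cinner J (V k x) x)"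
      by (simp add: norm_mult power2_eq_square)
    also have "\<dots> \<le> (norm u)\<^sup>2 * euclid_radius J d V"
      by (intro mult_left_mono er_ge[OF cs bl k x]) auto
    finally show ?thesis by (simp add: mult.commute)
  qed
qed

theorem mainTheorem6:
  fixes J :: "'a::{real_inner, complete_space} \<Rightarrow> 'a"
    and S T :: "nat \<Rightarrow> 'a \<Rightarrow> 'a"
    and d :: nat
  assumes "complex_structure J"
    and "\<And>k. k < d \<Longrightarrow> cbounded J (S k)"
    and "\<And>k. k < d \<Longrightarrow> cbounded J (T k)"
    and "\<And>k. k < d \<Longrightarrow> S k \<circ> T k = T k \<circ> S k"
  shows "euclid_radius J d (\<lambda>k. S k \<circ> T k)
           \<le> 2 * sqrt (real d) * euclid_radius J d S * euclid_radius J d T"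
proof -
  note cs = assms(1)
  have blS: "\<And>k. k < d \<Longrightarrow> bounded_linear (S k)" using assms(2) by (simp add: cbounded_def)
  have blT: "\<And>k. k < d \<Longrightarrow> bounded_linear (T k)" using assms(3) by (simp add: cbounded_def)
  define a where "a = euclid_radius J d S"
  define b where "b = euclid_radius J d T"
  have a0: "a \<ge> 0" unfolding a_def by (rule er_nonneg[OF cs blS])
  have b0: "b \<ge> 0" unfolding b_def by (rule er_nonneg[OF cs blT])
  have pt: "cmod (cinner J ((S k \<circ> T k) x) x) \<le> 2 * a * b" if k: "k < d" and x: "norm x = 1" for k x
  proof -
    have linS: "linear (S k)" using blS[OF k] bounded_linear.linear by blast
    have linT: "linear (T k)" using blT[OF k] bounded_linear.linear by blast
    have ST: "S k (T k y) = T k (S k y)" for y using assms(4)[OF k] by (metis comp_apply)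
    have SJ: "S k (J y) = J (S k y)" for y using assms(2)[OF k] by (simp add: cbounded_def)
    have TJ: "T k (J y) = J (T k y)" for y using assms(3)[OF k] by (simp add: cbounded_def)
    have "cmod (cinner J (S k (T k x)) x) \<le> 2 * a * b * (norm x)\<^sup>2"
      by (rule comm_cmod0[OF cs linS linT ST SJ TJ _ _ a0 b0])
         (use er_P[OF cs blS k] er_P[OF cs blT k] in \<open>simp_all add: a_def b_def\<close>)
    thus ?thesis using x by simp
  qed
  have "y \<le> 2 * sqrt (real d) * a * b"
    if "y \<in> insert 0 ((\<lambda>x. sqrt (\<Sum>k<d. (cmod (cinner J ((S k \<circ> T k) x) x))\<^sup>2)) ` {x. norm x = 1})" for y
  proof -
    { fix x :: 'a assume x: "norm x = 1"
      have "(\<Sum>k<d. (cmod (cinner J ((S k \<circ> T k) x) x))\<^sup>2) \<le> (\<Sum>k<d. (2 * a * b)\<^sup>2)"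
        using pt x by (intro sum_mono power_mono) auto
      hence "sqrt (\<Sum>k<d. (cmod (cinner J ((S k \<circ> T k) x) x))\<^sup>2) \<le> sqrt (real d * (2 * a * b)\<^sup>2)"
        by (intro real_sqrt_le_mono) simp
      also have "\<dots> = 2 * sqrt (real d) * a * b" using a0 b0 by (simp add: real_sqrt_mult)
      finally have "sqrt (\<Sum>k<d. (cmod (cinner J ((S k \<circ> T k) x) x))\<^sup>2) \<le> 2 * sqrt (real d) * a * b" . }
    moreover have "0 \<le> 2 * sqrt (real d) * a * b" using a0 b0 by simp
    ultimately show ?thesis using that by auto
  qed
  hence "euclid_radius J d (\<lambda>k. S k \<circ> T k) \<le> 2 * sqrt (real d) * a * b"
    unfolding euclid_radius_def by (intro cSup_least) auto
  thus ?thesis by (simp add: a_def b_def)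
qed

end
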